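(* Let $A$ be a real symmetric $n\times n$ matrix, $T\in\{1,\dots,n\}$, $u>\lambda_{\max}(A)$, $\delta_U>0$, $t>0$, and $Y=vv^T$ with $v\in\mathbb{R}^n$. Define $$U_A=\frac{((u+\delta_U)I-A)^{-2}}{\Phi^u(A)-\Phi^{u+\delta_U}(A)}+((u+\delta_U)I-A)^{-1}.$$ If $U_A\bullet Y\le 1/t$, then $\Phi^{u+\delta_U}(A+tY)\le\Phi^u(A)$ and $\lambda_{\max}(A+tY)<u+\delta_U$.
   Context: Eigenvalues $\lambda_1\le\dots\le\lambda_n$ are in increasing order. For a symmetric matrix $B$ and $u>\lambda_{\max}(B)$, the upper potential is $\Phi^u(B)=\sum_{i=n-T+1}^n\frac{1}{u-\lambda_i(B)}$ (sum over the $T$ largest eigenvalues). $C\bullet D=\operatorname{Tr}(C^TD)$ is the Frobenius product. *)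

theory Defs
  imports "Jordan_Normal_Form.Jordan_Normal_Form" "HOL-Library.Multiset"
begin

(* The list is 0-indexed: eigs B ! (i-1) = lambda_i. *)
definition eigs :: "real mat \<Rightarrow> real list" where
  "eigs B = sorted_list_of_multiset (proots (char_poly B))"

definition lambda_max :: "real mat \<Rightarrow> real" where
  "lambda_max B = last (eigs B)"

definition upper_potential :: "nat \<Rightarrow> real \<Rightarrow> real mat \<Rightarrow> real" where
  "upper_potential T u B =
     (\<Sum>i\<in>{dim_row B - T..<dim_row B}. 1 / (u - eigs B ! i))"

definition frob :: "real mat \<Rightarrow> real mat \<Rightarrow> real" where
  "frob C D = (\<Sum>i<dim_row C. \<Sum>j<dim_col C. C $$ (i,j) * D $$ (i,j))"

definition minv :: "real mat \<Rightarrow> real mat" where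
  "minv M = the (mat_inverse M)"

end

theory Submission
  imports Defs
begin
lemma kernel_exists:
  fixes cs :: "real vec list"
  assumes cs: "set cs \<subseteq> carrier_vec n" and len: "length cs < n"
  shows "\<exists>z\<in>carrier_vec n. z \<noteq> 0\<^sub>v n \<and> (\<forall>c\<in>set cs. c \<bullet> z = 0)"
proof -
  define c where "c = (\<lambda>i. if i < length cs then cs ! i else 0\<^sub>v n)"
  define M where "M = mat\<^sub>r n n (\<lambda>i. if i = n - 1 then 0\<^sub>v n else c i)"
  have cc: "c \<in> {0..<n} \<rightarrow> carrier_vec n" using cs unfolding c_def using nth_mem by (auto, blast)
  have "det M = 0" unfolding M_def by (rule det_row_0[OF _ cc], insert len, auto)
  moreover have M: "M \<in> carrier_mat n n" unfolding M_def by auto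
  ultimately obtain z where z: "z \<in> carrier_vec n" "z \<noteq> 0\<^sub>v n" "M *\<^sub>v z = 0\<^sub>v n"
    using det_0_iff_vec_prod_zero_field[OF M] by auto
  have "\<forall>x\<in>set cs. x \<bullet> z = 0"
  proof
    fix x assume "x \<in> set cs"
    then obtain i where i: "i < length cs" "x = cs ! i" by (auto simp: in_set_conv_nth)
    have "(M *\<^sub>v z) $ i = 0" using z(3) i len by auto
    moreover have "(M *\<^sub>v z) $ i = row M i \<bullet> z" using i len M by auto
    moreover have "cs ! i \<in> carrier_vec n" using i cs nth_mem by blast
    hence "row M i = x" using i len unfolding M_def c_def by (subst row_mat_of_row_fun, auto)
    ultimately show "x \<bullet> z = 0" by simp
  qed
  thus ?thesis using z by auto
qed

lemma sym_real_eigen: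
  fixes A :: "real mat"
  assumes A: "A \<in> carrier_mat n n" and sym: "transpose_mat A = A" and n: "n > 0"
  shows "\<exists>e v. v \<in> carrier_vec n \<and> v \<noteq> 0\<^sub>v n \<and> A *\<^sub>v v = e \<cdot>\<^sub>v v"
proof -
  define Ac where "Ac = map_mat (of_real :: real \<Rightarrow> complex) A"
  have Ac: "Ac \<in> carrier_mat n n" using A unfolding Ac_def by auto
  have symA: "\<And>i j. i < n \<Longrightarrow> j < n \<Longrightarrow> A $$ (i,j) = A $$ (j,i)"
    using sym A by (metis carrier_matD index_transpose_mat(1))
  have cp: "char_poly Ac = map_poly of_real (char_poly A)"
    unfolding Ac_def by (rule of_real_hom.char_poly_hom[OF A])
  from degree_monic_char_poly[OF Ac] n have "degree (char_poly Ac) > 0" by auto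
  hence "\<not> constant (poly (char_poly Ac))" by (simp add: constant_degree)
  from fundamental_theorem_of_algebra[OF this] obtain lam where
    "poly (char_poly Ac) lam = 0" by auto
  hence "eigenvalue Ac lam" using eigenvalue_root_char_poly[OF Ac] by auto
  then obtain z where z: "z \<in> carrier_vec n" "z \<noteq> 0\<^sub>v n" "Ac *\<^sub>v z = lam \<cdot>\<^sub>v z"
    unfolding eigenvalue_def eigenvector_def using Ac by auto
  define S where "S = (\<Sum>i<n. cnj (z $ i) * (Ac *\<^sub>v z) $ i)"
  define N where "N = (\<Sum>i<n. (cmod (z $ i))^2)"
  have cn: "\<And>w::complex. cnj w * w = (of_real (cmod w))^2"
    using complex_norm_square by (metis mult.commute of_real_power)
  have "S = (\<Sum>i<n. lam * of_real ((cmod (z $ i))^2))"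
    unfolding S_def z(3) using z(1)
    by (intro sum.cong refl, auto simp: cn)
  hence S1: "S = lam * of_real N" unfolding N_def by (simp add: sum_distrib_left)
  have Npos: "N > 0"
  proof -
    obtain i where i: "i < n" "z $ i \<noteq> 0" using z(1,2) by (metis eq_vecI index_zero_vec(1,2) carrier_vecD)
    have "N \<ge> (cmod (z $ i))^2" unfolding N_def
      by (rule member_le_sum, insert i, auto)
    moreover have "(cmod (z $ i))^2 > 0" using i by auto
    ultimately show ?thesis by linarith
  qed
  have "S = (\<Sum>i<n. \<Sum>j<n. of_real (A $$ (i,j)) * (cnj (z $ i) * z $ j))"
    unfolding S_def using z(1) Ac A
    by (intro sum.cong refl, auto simp: Ac_def scalar_prod_def sum_distrib_left ac_simps
       intro!: sum.cong)
  hence "Im S = (\<Sum>i<n. \<Sum>j<n. A $$ (i,j) * (Re (z $ i) * Im (z $ j) - Im (z $ i) * Re (z $ j)))"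
    by (simp add: Im_sum)
  also have "\<dots> = (\<Sum>i<n. \<Sum>j<n. A $$ (i,j) * (Re (z $ i) * Im (z $ j)))
      - (\<Sum>i<n. \<Sum>j<n. A $$ (i,j) * (Im (z $ i) * Re (z $ j)))"
    by (simp add: right_diff_distrib sum_subtractf)
  also have "(\<Sum>i<n. \<Sum>j<n. A $$ (i,j) * (Im (z $ i) * Re (z $ j)))
     = (\<Sum>j<n. \<Sum>i<n. A $$ (i,j) * (Im (z $ i) * Re (z $ j)))"
    by (rule sum.swap)
  also have "\<dots> = (\<Sum>i<n. \<Sum>j<n. A $$ (i,j) * (Re (z $ i) * Im (z $ j)))"
    using symA by (intro sum.cong refl, auto simp: ac_simps)
  finally have "Im S = 0" by simp
  with S1 have "Im lam * N = 0" by simp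
  with Npos have "Im lam = 0" by simp
  hence lamr: "lam = of_real (Re lam)" by (simp add: complex_eq_iff)
  have "poly (char_poly A) (Re lam) = 0"
    using \<open>poly (char_poly Ac) lam = 0\<close> unfolding cp
    by (subst (asm) lamr, simp only: of_real_hom.poly_map_poly, simp)
  hence "eigenvalue A (Re lam)" using eigenvalue_root_char_poly[OF A] by auto
  thus ?thesis unfolding eigenvalue_def eigenvector_def using A by auto
qed

definition orthonormal :: "nat \<Rightarrow> real vec list \<Rightarrow> bool" where
  "orthonormal n vs \<longleftrightarrow> set vs \<subseteq> carrier_vec n \<and>
     (\<forall>i<length vs. \<forall>j<length vs. vs ! i \<bullet> vs ! j = (if i = j then 1 else 0))"

lemma sprod_self_pos:
  fixes z :: "real vec"
  assumes z: "z \<in> carrier_vec n" "z \<noteq> 0\<^sub>v n"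
  shows "z \<bullet> z > 0"
proof -
  obtain i where i: "i < n" "z $ i \<noteq> 0" using z by (metis eq_vecI index_zero_vec(1,2) carrier_vecD)
  have "z \<bullet> z = (\<Sum>k<n. (z $ k)^2)" using z unfolding scalar_prod_def
    by (auto simp: power2_eq_square lessThan_atLeast0)
  also have "\<dots> \<ge> (z $ i)^2" by (rule member_le_sum, insert i, auto)
  finally show ?thesis using i by (smt (verit) zero_less_power2)
qed

lemma orthonormal_snoc:
  assumes on: "orthonormal n qs" and z: "z \<in> carrier_vec n" "z \<noteq> 0\<^sub>v n"
    and zq: "\<forall>c\<in>set qs. c \<bullet> z = 0"
  shows "\<exists>c. orthonormal n (qs @ [c \<cdot>\<^sub>v z])"
proof -
  have qs: "set qs \<subseteq> carrier_vec n" using on unfolding orthonormal_def by auto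
  define z' where "z' = (1 / sqrt (z \<bullet> z)) \<cdot>\<^sub>v z"
  have zp: "z \<bullet> z > 0" using sprod_self_pos[OF z(1,2)] .
  have z'c: "z' \<in> carrier_vec n" unfolding z'_def using z by auto
  have z'z': "z' \<bullet> z' = 1" unfolding z'_def using z zp
    by (simp add: smult_scalar_prod_distrib scalar_prod_smult_distrib[of _ n] real_sqrt_mult[symmetric] del: real_sqrt_mult)
  have z'q: "\<And>c. c \<in> set qs \<Longrightarrow> c \<bullet> z' = 0" unfolding z'_def using z qs zq
    by (auto simp: scalar_prod_smult_distrib[of _ n])
  have z'q2: "\<And>c. c \<in> set qs \<Longrightarrow> z' \<bullet> c = 0"
    using z'q qs z'c by (metis comm_scalar_prod subsetD)
  have "orthonormal n (qs @ [z'])"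
    using on unfolding orthonormal_def
  proof (intro conjI allI impI)
    show "set (qs @ [z']) \<subseteq> carrier_vec n" using qs z'c by auto
    fix i j assume i: "i < length (qs @ [z'])" and j: "j < length (qs @ [z'])"
    assume IH: "set qs \<subseteq> carrier_vec n \<and>
      (\<forall>i<length qs. \<forall>j<length qs. qs ! i \<bullet> qs ! j = (if i = j then 1 else 0))"
    show "(qs @ [z']) ! i \<bullet> (qs @ [z']) ! j = (if i = j then 1 else 0)"
    proof (cases "i < length qs")
      case True note i' = this
      show ?thesis
      proof (cases "j < length qs")
        case True thus ?thesis using i' IH by (auto simp: nth_append)
      next
        case False hence "j = length qs" using j by auto
        thus ?thesis using i' z'q by (auto simp: nth_append)
      qed
    next
      case False hence i': "i = length qs" using i by auto
      show ?thesis
      proof (cases "j < length qs")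
        case True thus ?thesis using i' z'q2 by (auto simp: nth_append)
      next
        case False hence "j = length qs" using j by auto
        thus ?thesis using i' z'z' by (auto simp: nth_append)
      qed
    qed
  qed
  thus ?thesis unfolding z'_def by blast
qed

lemma orthonormal_extend:
  assumes "orthonormal n qs" "length qs \<le> n"
  shows "\<exists>rs. orthonormal n (qs @ rs) \<and> length (qs @ rs) = n"
  using assms
proof (induction "n - length qs" arbitrary: qs)
  case 0
  thus ?case by (intro exI[of _ "[]"], auto)
next
  case (Suc d)
  hence len: "length qs < n" and qs: "set qs \<subseteq> carrier_vec n" unfolding orthonormal_def by auto
  from kernel_exists[OF qs len] obtain z where z: "z \<in> carrier_vec n" "z \<noteq> 0\<^sub>v n"
    "\<forall>c\<in>set qs. c \<bullet> z = 0" by auto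
  from orthonormal_snoc[OF Suc(3) z] obtain c where on: "orthonormal n (qs @ [c \<cdot>\<^sub>v z])" by auto
  have "d = n - length (qs @ [c \<cdot>\<^sub>v z])" using Suc(2) by auto
  from Suc(1)[OF this on] len obtain rs where
    "orthonormal n (qs @ [c \<cdot>\<^sub>v z] @ rs) \<and> length (qs @ [c \<cdot>\<^sub>v z] @ rs) = n" by auto
  thus ?case by (intro exI[of _ "c \<cdot>\<^sub>v z # rs"], auto)
qed

lemma orthonormal_mat:
  assumes "orthonormal n vs"
  shows "mat_of_rows n vs * mat_of_cols n vs = 1\<^sub>m (length vs)"
proof -
  have c: "\<And>i. i < length vs \<Longrightarrow> vs ! i \<in> carrier_vec n" using assms unfolding orthonormal_def by auto
  show ?thesis
    by (rule eq_matI, insert assms c, auto simp: orthonormal_def mat_of_rows_row col_mat_of_cols)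
qed

lemma sym_sprod:
  fixes A :: "real mat"
  assumes A: "A \<in> carrier_mat n n" "transpose_mat A = A" and a: "a \<in> carrier_vec n" and b: "b \<in> carrier_vec n"
  shows "a \<bullet> (A *\<^sub>v b) = (A *\<^sub>v a) \<bullet> b"
  using transpose_vec_mult_scalar[OF A(1) b a] A(2) by simp

lemma eigen_list:
  fixes A :: "real mat"
  assumes A: "A \<in> carrier_mat n n" and sym: "transpose_mat A = A"
  shows "k \<le> n \<Longrightarrow> \<exists>qs es. orthonormal n qs \<and> length qs = k \<and> length es = k \<and>
     (\<forall>i<k. A *\<^sub>v (qs ! i) = (es ! i) \<cdot>\<^sub>v (qs ! i))"
proof (induction k)
  case 0
  thus ?case by (intro exI[of _ "[]"], auto simp: orthonormal_def)
next
  case (Suc k)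
  then obtain qs es where on: "orthonormal n qs" and lq: "length qs = k" and le: "length es = k"
    and ev: "\<forall>i<k. A *\<^sub>v (qs ! i) = (es ! i) \<cdot>\<^sub>v (qs ! i)" by auto
  have kn: "k < n" using Suc by auto
  have qsc: "\<And>i. i < k \<Longrightarrow> qs ! i \<in> carrier_vec n" using on lq unfolding orthonormal_def by auto
  from orthonormal_extend[OF on] kn lq obtain rs where on2: "orthonormal n (qs @ rs)"
    and lqr: "length (qs @ rs) = n" by auto
  define m where "m = n - k"
  have lr: "length rs = m" using lqr lq unfolding m_def by auto
  have m0: "m > 0" using kn unfolding m_def by auto
  have rsc: "\<And>j. j < m \<Longrightarrow> rs ! j \<in> carrier_vec n" using on2 lr unfolding orthonormal_def by auto
  define W where "W = mat_of_cols n (qs @ rs)"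
  define R where "R = mat_of_cols n rs"
  define Q where "Q = mat_of_cols n qs"
  have W: "W \<in> carrier_mat n n" unfolding W_def using lqr by auto
  have R: "R \<in> carrier_mat n m" unfolding R_def using lr by auto
  have Q: "Q \<in> carrier_mat n k" unfolding Q_def using lq by auto
  have WtW: "transpose_mat W * W = 1\<^sub>m n"
    unfolding W_def transpose_mat_of_cols orthonormal_mat[OF on2, unfolded lqr] ..
  have WWt: "W * transpose_mat W = 1\<^sub>m n"
    by (rule mat_mult_left_right_inverse[OF _ W WtW], insert W, auto)
  have ij: "\<And>i j. i < n \<Longrightarrow> j < n \<Longrightarrow> (qs @ rs) ! i \<bullet> (qs @ rs) ! j = (if i = j then 1 else 0)"
    using on2 lqr unfolding orthonormal_def by auto
  have RtR: "transpose_mat R * R = 1\<^sub>m m"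
    unfolding R_def transpose_mat_of_cols
  proof (rule eq_matI)
    fix i j assume i: "i < dim_row (1\<^sub>m m)" and j: "j < dim_col (1\<^sub>m m)"
    hence "rs ! i \<bullet> rs ! j = (if i = j then 1 else 0)"
      using ij[of "k + i" "k + j"] lq lr m_def by (auto simp: nth_append)
    thus "(mat_of_rows n rs * mat_of_cols n rs) $$ (i, j) = 1\<^sub>m m $$ (i, j)"
      using i j lr rsc by (auto simp: mat_of_rows_row col_mat_of_cols)
  qed (insert lr, auto)
  have QtR: "transpose_mat Q * R = 0\<^sub>m k m"
    unfolding R_def Q_def transpose_mat_of_cols
  proof (rule eq_matI)
    fix i j assume i: "i < dim_row (0\<^sub>m k m)" and j: "j < dim_col (0\<^sub>m k m)"
    hence "qs ! i \<bullet> rs ! j = 0"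
      using ij[of "i" "k + j"] lq lr m_def by (auto simp: nth_append)
    thus "(mat_of_rows n qs * mat_of_cols n rs) $$ (i, j) = 0\<^sub>m k m $$ (i, j)"
      using i j lr lq rsc qsc by (auto simp: mat_of_rows_row col_mat_of_cols)
  qed (insert lr lq, auto)
  define A3 where "A3 = transpose_mat R * A * R"
  have A3: "A3 \<in> carrier_mat m m" unfolding A3_def using R A by auto
  have sym3: "transpose_mat A3 = A3"
  proof -
    have RA: "transpose_mat R * A \<in> carrier_mat m n" using R A by auto
    have "transpose_mat A3 = transpose_mat R * transpose_mat (transpose_mat R * A)"
      unfolding A3_def by (rule transpose_mult[OF RA R])
    also have "transpose_mat (transpose_mat R * A) = transpose_mat A * R"
      using transpose_mult[of "transpose_mat R" m n A n] R A by simp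
    finally show ?thesis unfolding A3_def using sym R A by (simp add: assoc_mult_mat[of _ m n _ n _ m])
  qed
  from sym_real_eigen[OF A3 sym3 m0] obtain mu y where y: "y \<in> carrier_vec m" "y \<noteq> 0\<^sub>v m"
    "A3 *\<^sub>v y = mu \<cdot>\<^sub>v y" by auto
  define z where "z = R *\<^sub>v y"
  have z: "z \<in> carrier_vec n" unfolding z_def using R y by auto
  have Rtz: "transpose_mat R *\<^sub>v z = y" unfolding z_def
    using RtR R y by (simp add: assoc_mult_mat_vec[symmetric, of _ m n])
  have Qtz: "transpose_mat Q *\<^sub>v z = 0\<^sub>v k" unfolding z_def
    using QtR R Q y by (simp add: assoc_mult_mat_vec[symmetric, of _ k n], intro eq_vecI, auto)
  have Az: "A *\<^sub>v z \<in> carrier_vec n" using A z by auto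
  have RtAz: "transpose_mat R *\<^sub>v (A *\<^sub>v z) = mu \<cdot>\<^sub>v y"
    using y(3) unfolding A3_def z_def using R A y
    by (simp add: assoc_mult_mat_vec[of _ m n _ n] assoc_mult_mat_vec[of _ n n _ m]
      assoc_mult_mat_vec[of _ m n _ m])
  have comp_q: "\<And>i. i < k \<Longrightarrow> qs ! i \<bullet> z = 0"
  proof -
    fix i assume i: "i < k"
    have "(transpose_mat Q *\<^sub>v z) $ i = qs ! i \<bullet> z"
      unfolding Q_def transpose_mat_of_cols using i lq qsc by (auto simp: mat_of_rows_row)
    thus "qs ! i \<bullet> z = 0" using Qtz i by auto
  qed
  have comp_qA: "\<And>i. i < k \<Longrightarrow> qs ! i \<bullet> (A *\<^sub>v z) = 0"
  proof -
    fix i assume i: "i < k"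
    have "qs ! i \<bullet> (A *\<^sub>v z) = (A *\<^sub>v qs ! i) \<bullet> z" by (rule sym_sprod[OF A sym qsc[OF i] z])
    also have "\<dots> = es ! i * (qs ! i \<bullet> z)" using ev i qsc[OF i] z by auto
    finally show "qs ! i \<bullet> (A *\<^sub>v z) = 0" using comp_q[OF i] by simp
  qed
  have comp_r: "\<And>j. j < m \<Longrightarrow> rs ! j \<bullet> z = y $ j"
  proof -
    fix j assume j: "j < m"
    have "(transpose_mat R *\<^sub>v z) $ j = rs ! j \<bullet> z"
      unfolding R_def transpose_mat_of_cols using j lr rsc by (auto simp: mat_of_rows_row)
    thus "rs ! j \<bullet> z = y $ j" using Rtz by auto
  qed
  have comp_rA: "\<And>j. j < m \<Longrightarrow> rs ! j \<bullet> (A *\<^sub>v z) = mu * y $ j"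
  proof -
    fix j assume j: "j < m"
    have "(transpose_mat R *\<^sub>v (A *\<^sub>v z)) $ j = rs ! j \<bullet> (A *\<^sub>v z)"
      unfolding R_def transpose_mat_of_cols using j lr rsc by (auto simp: mat_of_rows_row)
    thus "rs ! j \<bullet> (A *\<^sub>v z) = mu * y $ j" using RtAz j y by auto
  qed
  have WtAz: "transpose_mat W *\<^sub>v (A *\<^sub>v z) = transpose_mat W *\<^sub>v (mu \<cdot>\<^sub>v z)"
  proof (rule eq_vecI)
    fix i assume "i < dim_vec (transpose_mat W *\<^sub>v (mu \<cdot>\<^sub>v z))"
    hence i: "i < n" using W by auto
    have wi: "(qs @ rs) ! i \<in> carrier_vec n" using i on2 lqr unfolding orthonormal_def
      by (metis nth_mem subsetD)
    have e1: "(transpose_mat W *\<^sub>v (A *\<^sub>v z)) $ i = (qs @ rs) ! i \<bullet> (A *\<^sub>v z)"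
      unfolding W_def transpose_mat_of_cols using i lqr wi by (auto simp: mat_of_rows_row)
    have e2: "(transpose_mat W *\<^sub>v (mu \<cdot>\<^sub>v z)) $ i = mu * ((qs @ rs) ! i \<bullet> z)"
      unfolding W_def transpose_mat_of_cols using i lqr wi z by (auto simp: mat_of_rows_row)
    show "(transpose_mat W *\<^sub>v (A *\<^sub>v z)) $ i = (transpose_mat W *\<^sub>v (mu \<cdot>\<^sub>v z)) $ i"
      unfolding e1 e2
    proof (cases "i < k")
      case True thus "(qs @ rs) ! i \<bullet> (A *\<^sub>v z) = mu * ((qs @ rs) ! i \<bullet> z)"
        using comp_q comp_qA lq by (auto simp: nth_append)
    next
      case False
      hence "i - k < m" using i m_def by auto
      thus "(qs @ rs) ! i \<bullet> (A *\<^sub>v z) = mu * ((qs @ rs) ! i \<bullet> z)"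
        using False comp_r comp_rA lq by (auto simp: nth_append)
    qed
  qed (insert W, auto)
  have Azmu: "A *\<^sub>v z = mu \<cdot>\<^sub>v z"
  proof -
    have "A *\<^sub>v z = (W * transpose_mat W) *\<^sub>v (A *\<^sub>v z)" using WWt Az by simp
    also have "\<dots> = W *\<^sub>v (transpose_mat W *\<^sub>v (A *\<^sub>v z))" using W Az by (simp add: assoc_mult_mat_vec[of _ n n _ n])
    also have "\<dots> = W *\<^sub>v (transpose_mat W *\<^sub>v (mu \<cdot>\<^sub>v z))" unfolding WtAz ..
    also have "\<dots> = (W * transpose_mat W) *\<^sub>v (mu \<cdot>\<^sub>v z)" using W z by (simp add: assoc_mult_mat_vec[of _ n n _ n])
    also have "\<dots> = mu \<cdot>\<^sub>v z" using WWt z by simp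
    finally show ?thesis .
  qed
  have z0: "z \<noteq> 0\<^sub>v n" using Rtz y(2) R by auto
  have zq: "\<forall>c\<in>set qs. c \<bullet> z = 0" using comp_q lq by (auto simp: in_set_conv_nth)
  from orthonormal_snoc[OF on z z0 zq] obtain c where on3: "orthonormal n (qs @ [c \<cdot>\<^sub>v z])" by auto
  show ?case
  proof (intro exI conjI)
    show "orthonormal n (qs @ [c \<cdot>\<^sub>v z])" by fact
    show "length (qs @ [c \<cdot>\<^sub>v z]) = Suc k" using lq by simp
    show "length (es @ [mu]) = Suc k" using le by simp
    show "\<forall>i<Suc k. A *\<^sub>v (qs @ [c \<cdot>\<^sub>v z]) ! i = (es @ [mu]) ! i \<cdot>\<^sub>v (qs @ [c \<cdot>\<^sub>v z]) ! i"
    proof (intro allI impI)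
      fix i assume "i < Suc k"
      thus "A *\<^sub>v (qs @ [c \<cdot>\<^sub>v z]) ! i = (es @ [mu]) ! i \<cdot>\<^sub>v (qs @ [c \<cdot>\<^sub>v z]) ! i"
        using ev lq le Azmu A z by (cases "i < k", auto simp: nth_append mult_mat_vec smult_smult_assoc mult.commute)
    qed
  qed
qed

definition sand :: "nat \<Rightarrow> real mat \<Rightarrow> (nat \<Rightarrow> real) \<Rightarrow> real mat" where
  "sand n Q f = Q * mat_diag n f * transpose_mat Q"

definition tr :: "real mat \<Rightarrow> real" where
  "tr C = (\<Sum>i<dim_row C. C $$ (i,i))"

lemma sand_carrier[simp]: "Q \<in> carrier_mat n n \<Longrightarrow> sand n Q f \<in> carrier_mat n n"
  unfolding sand_def by auto

lemma sand_dims[simp]: "Q \<in> carrier_mat n n \<Longrightarrow> dim_row (sand n Q f) = n"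
  "Q \<in> carrier_mat n n \<Longrightarrow> dim_col (sand n Q f) = n"
  unfolding sand_def by auto

lemma mat_diag_dims[simp]: "dim_row (mat_diag n f) = n" "dim_col (mat_diag n f) = n"
  unfolding mat_diag_def by auto

lemma sand_entry:
  assumes Q: "Q \<in> carrier_mat n n" and i: "i < n" and j: "j < n"
  shows "sand n Q f $$ (i,j) = (\<Sum>k<n. Q $$ (i,k) * f k * Q $$ (j,k))"
proof -
  have "Q * mat_diag n f = mat n n (\<lambda>(i,j). Q $$ (i,j) * f j)"
    by (rule mat_diag_mult_right[OF Q])
  thus ?thesis unfolding sand_def using Q i j
    by (auto simp: scalar_prod_def lessThan_atLeast0 intro!: sum.cong)
qed

lemma sand_sym:
  assumes Q: "Q \<in> carrier_mat n n"
  shows "transpose_mat (sand n Q f) = sand n Q f"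
  by (rule eq_matI, insert Q, auto simp: sand_entry ac_simps intro!: sum.cong)

lemma sand_one:
  assumes Q: "Q \<in> carrier_mat n n" and QQt: "Q * transpose_mat Q = 1\<^sub>m n"
  shows "sand n Q (\<lambda>_. 1) = 1\<^sub>m n"
  unfolding sand_def mat_diag_one using Q QQt by simp

lemma sand_mult:
  assumes Q: "Q \<in> carrier_mat n n" and QtQ: "transpose_mat Q * Q = 1\<^sub>m n"
  shows "sand n Q f * sand n Q g = sand n Q (\<lambda>i. f i * g i)"
proof -
  let ?D = "mat_diag n f" and ?E = "mat_diag n g" and ?T = "transpose_mat Q"
  have D: "?D \<in> carrier_mat n n" and E: "?E \<in> carrier_mat n n" and T: "?T \<in> carrier_mat n n" using Q by auto
  have TQ: "\<And>X. X \<in> carrier_mat n n \<Longrightarrow> ?T * (Q * X) = X"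
  proof -
    fix X :: "real mat" assume X: "X \<in> carrier_mat n n"
    have "?T * (Q * X) = (?T * Q) * X" using T Q X by (simp add: assoc_mult_mat)
    thus "?T * (Q * X) = X" using QtQ X by simp
  qed
  have QD: "Q * ?D \<in> carrier_mat n n" and QET: "Q * ?E * ?T \<in> carrier_mat n n" and QE: "Q * ?E \<in> carrier_mat n n"
    using Q D E T by auto
  have "sand n Q f * sand n Q g = (Q * ?D) * (?T * (Q * ?E * ?T))"
    unfolding sand_def by (rule assoc_mult_mat[OF QD T QET])
  also have "?T * (Q * ?E * ?T) = (?T * (Q * ?E)) * ?T"
    by (rule assoc_mult_mat[OF T QE T, symmetric])
  also have "?T * (Q * ?E) = ?E" using TQ[OF E] .
  also have "(Q * ?D) * (?E * ?T) = ((Q * ?D) * ?E) * ?T"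
    by (rule assoc_mult_mat[OF QD E T, symmetric])
  also have "(Q * ?D) * ?E = Q * (?D * ?E)" by (rule assoc_mult_mat[OF Q D E])
  finally show ?thesis unfolding sand_def mat_diag_diag .
qed

lemma sand_lin:
  assumes Q: "Q \<in> carrier_mat n n"
  shows "c \<cdot>\<^sub>m sand n Q f - sand n Q g = sand n Q (\<lambda>i. c * f i - g i)"
  by (rule eq_matI, insert Q, auto simp: sand_entry sum_distrib_left
        sum_subtractf[symmetric] algebra_simps intro!: sum.cong)

lemma sand_trace:
  assumes Q: "Q \<in> carrier_mat n n" and QtQ: "transpose_mat Q * Q = 1\<^sub>m n"
  shows "tr (sand n Q f) = (\<Sum>k<n. f k)"
proof -
  have col: "\<And>k. k < n \<Longrightarrow> (\<Sum>i<n. Q $$ (i,k) * Q $$ (i,k)) = 1"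
  proof -
    fix k assume k: "k < n"
    have "(transpose_mat Q * Q) $$ (k,k) = 1" using QtQ k by simp
    thus "(\<Sum>i<n. Q $$ (i,k) * Q $$ (i,k)) = 1" using Q k
      by (auto simp: scalar_prod_def lessThan_atLeast0)
  qed
  have "tr (sand n Q f) = (\<Sum>i<n. \<Sum>k<n. Q $$ (i,k) * f k * Q $$ (i,k))"
    unfolding tr_def using Q by (auto simp: sand_entry)
  also have "\<dots> = (\<Sum>k<n. \<Sum>i<n. Q $$ (i,k) * f k * Q $$ (i,k))" by (rule sum.swap)
  also have "\<dots> = (\<Sum>k<n. f k * (\<Sum>i<n. Q $$ (i,k) * Q $$ (i,k)))"
    by (simp add: sum_distrib_left ac_simps)
  also have "\<dots> = (\<Sum>k<n. f k)" using col by simp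
  finally show ?thesis .
qed

lemma col_sprod:
  assumes Q: "Q \<in> carrier_mat n n" and x: "x \<in> carrier_vec n" and k: "k < n"
  shows "col Q k \<bullet> x = (\<Sum>i<n. Q $$ (i,k) * x $ i)"
  using Q x k by (auto simp: scalar_prod_def lessThan_atLeast0)

lemma sand_quad:
  assumes Q: "Q \<in> carrier_mat n n" and x: "x \<in> carrier_vec n"
  shows "x \<bullet> (sand n Q f *\<^sub>v x) = (\<Sum>k<n. f k * (col Q k \<bullet> x)^2)"
proof -
  have "x \<bullet> (sand n Q f *\<^sub>v x) = (\<Sum>i<n. x $ i * (\<Sum>j<n. (\<Sum>k<n. Q $$ (i,k) * f k * Q $$ (j,k)) * x $ j))"
    using Q x by (auto simp: scalar_prod_def lessThan_atLeast0 sand_entry intro!: sum.cong)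
  also have "\<dots> = (\<Sum>i<n. \<Sum>j<n. \<Sum>k<n. f k * (Q $$ (i,k) * x $ i) * (Q $$ (j,k) * x $ j))"
    by (simp add: sum_distrib_left sum_distrib_right ac_simps)
  also have "\<dots> = (\<Sum>i<n. \<Sum>k<n. \<Sum>j<n. f k * (Q $$ (i,k) * x $ i) * (Q $$ (j,k) * x $ j))"
    by (rule sum.cong[OF refl], rule sum.swap)
  also have "\<dots> = (\<Sum>k<n. \<Sum>i<n. \<Sum>j<n. f k * (Q $$ (i,k) * x $ i) * (Q $$ (j,k) * x $ j))"
    by (rule sum.swap)
  also have "\<dots> = (\<Sum>k<n. f k * (\<Sum>i<n. Q $$ (i,k) * x $ i) * (\<Sum>j<n. Q $$ (j,k) * x $ j))"
    by (simp add: sum_distrib_left sum_distrib_right ac_simps)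
  also have "\<dots> = (\<Sum>k<n. f k * (col Q k \<bullet> x)^2)"
    using col_sprod[OF Q x] by (simp add: power2_eq_square ac_simps)
  finally show ?thesis .
qed

lemma minv_unique:
  fixes M R :: "real mat"
  assumes M: "M \<in> carrier_mat n n" and R: "R \<in> carrier_mat n n" and MR: "M * R = 1\<^sub>m n"
  shows "minv M = R"
proof (cases "mat_inverse M")
  case None
  have "det M * det R = 1" using det_mult[OF M R] MR by simp
  hence "det M \<noteq> 0" by auto
  from det_non_zero_imp_unit[OF M this, of undefined] mat_inverse(1)[OF M None, of undefined]
  show ?thesis by blast
next
  case (Some R')
  from mat_inverse(2)[OF M Some] have R': "R' \<in> carrier_mat n n" "R' * M = 1\<^sub>m n" by auto
  have "R = (R' * M) * R" using R' R by simp
  also have "\<dots> = R' * (M * R)" using assoc_mult_mat[OF R'(1) M R] .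
  also have "\<dots> = R'" using MR R' by simp
  finally have "R' = R" by simp
  thus ?thesis unfolding minv_def Some by simp
qed

lemma spectral:
  fixes A :: "real mat"
  assumes A: "A \<in> carrier_mat n n" and sym: "transpose_mat A = A"
  shows "\<exists>Q l. Q \<in> carrier_mat n n \<and> transpose_mat Q * Q = 1\<^sub>m n \<and> Q * transpose_mat Q = 1\<^sub>m n
     \<and> A = sand n Q l"
proof -
  from eigen_list[OF A sym, of n] obtain qs es where on: "orthonormal n qs" and lq: "length qs = n"
    and le: "length es = n" and ev: "\<forall>i<n. A *\<^sub>v qs ! i = es ! i \<cdot>\<^sub>v qs ! i" by auto
  define Q where "Q = mat_of_cols n qs"
  have Q: "Q \<in> carrier_mat n n" unfolding Q_def using lq by auto
  have QtQ: "transpose_mat Q * Q = 1\<^sub>m n"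
    unfolding Q_def transpose_mat_of_cols orthonormal_mat[OF on, unfolded lq] ..
  have QQt: "Q * transpose_mat Q = 1\<^sub>m n"
    by (rule mat_mult_left_right_inverse[OF _ Q QtQ], insert Q, auto)
  have qsc: "\<And>i. i < n \<Longrightarrow> qs ! i \<in> carrier_vec n" using on lq unfolding orthonormal_def by auto
  have AQ: "A * Q = Q * mat_diag n (\<lambda>i. es ! i)"
  proof (rule eq_matI)
    fix i j assume i: "i < dim_row (Q * mat_diag n (\<lambda>i. es ! i))" and j: "j < dim_col (Q * mat_diag n (\<lambda>i. es ! i))"
    hence i: "i < n" and j: "j < n" using Q by auto
    have "(A * Q) $$ (i,j) = (A *\<^sub>v qs ! j) $ i" using A Q i j qsc[OF j] unfolding Q_def
      using lq by (simp add: col_mat_of_cols)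
    also have "\<dots> = es ! j * qs ! j $ i" using ev j i qsc[OF j] by simp
    also have "\<dots> = (Q * mat_diag n (\<lambda>i. es ! i)) $$ (i,j)"
      using mat_diag_mult_right[OF Q] i j unfolding Q_def using lq qsc[OF j]
      by (simp add: mat_of_cols_def)
    finally show "(A * Q) $$ (i,j) = (Q * mat_diag n (\<lambda>i. es ! i)) $$ (i,j)" .
  qed (insert A Q, auto)
  have "A = A * (Q * transpose_mat Q)" using QQt A by simp
  also have "\<dots> = (A * Q) * transpose_mat Q" using A Q by (simp add: assoc_mult_mat)
  also have "\<dots> = sand n Q (\<lambda>i. es ! i)" unfolding AQ sand_def ..
  finally show ?thesis using Q QtQ QQt by blast
qed

lemma proots_linear_prod: "proots (\<Prod>a\<leftarrow>xs. [:- a, 1:]) = mset (xs :: real list)"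
proof (induction xs)
  case Nil thus ?case by simp
next
  case (Cons a xs)
  have nz: "(\<Prod>a\<leftarrow>xs. [:- a, 1:]) \<noteq> (0 :: real poly)"
    by (auto simp: prod_list_zero_iff)
  have "proots (\<Prod>a\<leftarrow>a # xs. [:- a, 1:]) = proots [:- a, 1:] + proots (\<Prod>a\<leftarrow>xs. [:- a, 1:])"
    unfolding list.map prod_list.Cons using nz by (intro proots_mult, auto)
  also have "proots [:- a, 1:] = {#a#}" using proots_linear_factor[of "- a"] by simp
  finally show ?case using Cons by simp
qed

lemma eigs_sand:
  assumes Q: "Q \<in> carrier_mat n n" and QtQ: "transpose_mat Q * Q = 1\<^sub>m n"
    and QQt: "Q * transpose_mat Q = 1\<^sub>m n"
  shows "eigs (sand n Q l) = sort (map l [0..<n])"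
proof -
  let ?D = "mat_diag n l"
  have "similar_mat (sand n Q l) ?D" unfolding sand_def
    by (rule similar_matI[of _ _ Q "transpose_mat Q" n], insert Q QtQ QQt, auto)
  hence "char_poly (sand n Q l) = char_poly ?D" by (rule char_poly_similar)
  also have "\<dots> = (\<Prod>a\<leftarrow>diag_mat ?D. [:- a, 1:])"
    by (rule char_poly_upper_triangular[of _ n], auto simp: upper_triangular_def mat_diag_def)
  also have "diag_mat ?D = map l [0..<n]" unfolding diag_mat_def mat_diag_def by auto
  finally have cp: "char_poly (sand n Q l) = (\<Prod>a\<leftarrow>map l [0..<n]. [:- a, 1:])" .
  show ?thesis unfolding eigs_def cp proots_linear_prod sorted_list_of_multiset_mset ..
qed

lemma sorted_le_last:
  assumes s: "sorted ys" and x: "x \<in> set (ys :: real list)"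
  shows "x \<le> last ys"
proof -
  from x obtain i where i: "i < length ys" "x = ys ! i" by (auto simp: in_set_conv_nth)
  have ne: "ys \<noteq> []" using x by auto
  have "ys ! i \<le> ys ! (length ys - 1)" using s i by (intro sorted_nth_mono, auto)
  thus ?thesis using i ne by (simp add: last_conv_nth)
qed

lemma sand_bil:
  assumes Q: "Q \<in> carrier_mat n n" and x: "x \<in> carrier_vec n" and y: "y \<in> carrier_vec n"
  shows "x \<bullet> (sand n Q f *\<^sub>v y) = (\<Sum>k<n. f k * (col Q k \<bullet> x) * (col Q k \<bullet> y))"
proof -
  have "x \<bullet> (sand n Q f *\<^sub>v y) = (\<Sum>i<n. x $ i * (\<Sum>j<n. (\<Sum>k<n. Q $$ (i,k) * f k * Q $$ (j,k)) * y $ j))"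
    using Q x y by (auto simp: scalar_prod_def lessThan_atLeast0 sand_entry intro!: sum.cong)
  also have "\<dots> = (\<Sum>i<n. \<Sum>j<n. \<Sum>k<n. f k * (Q $$ (i,k) * x $ i) * (Q $$ (j,k) * y $ j))"
    by (simp add: sum_distrib_left sum_distrib_right ac_simps)
  also have "\<dots> = (\<Sum>i<n. \<Sum>k<n. \<Sum>j<n. f k * (Q $$ (i,k) * x $ i) * (Q $$ (j,k) * y $ j))"
    by (rule sum.cong[OF refl], rule sum.swap)
  also have "\<dots> = (\<Sum>k<n. \<Sum>i<n. \<Sum>j<n. f k * (Q $$ (i,k) * x $ i) * (Q $$ (j,k) * y $ j))"
    by (rule sum.swap)
  also have "\<dots> = (\<Sum>k<n. f k * (\<Sum>i<n. Q $$ (i,k) * x $ i) * (\<Sum>j<n. Q $$ (j,k) * y $ j))"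
    by (simp add: sum_distrib_left sum_distrib_right ac_simps)
  also have "\<dots> = (\<Sum>k<n. f k * (col Q k \<bullet> x) * (col Q k \<bullet> y))"
    using col_sprod[OF Q x] col_sprod[OF Q y] by simp
  finally show ?thesis .
qed

lemma sprod_self_sand:
  fixes x y :: "real vec"
  assumes Q: "Q \<in> carrier_mat n n" and QQt: "Q * transpose_mat Q = 1\<^sub>m n"
    and x: "x \<in> carrier_vec n" and y: "y \<in> carrier_vec n"
  shows "x \<bullet> y = (\<Sum>k<n. (col Q k \<bullet> x) * (col Q k \<bullet> y))"
  using sand_bil[OF Q x y, of "\<lambda>_. 1"] sand_one[OF Q QQt] y by simp

lemma weyl_count:
  fixes A B Q P :: "real mat"
  assumes Q: "Q \<in> carrier_mat n n" "Q * transpose_mat Q = 1\<^sub>m n" and A: "A = sand n Q l"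
    and P: "P \<in> carrier_mat n n" "P * transpose_mat P = 1\<^sub>m n" and B: "B = sand n P m"
    and mono: "\<And>z. z \<in> carrier_vec n \<Longrightarrow> z \<bullet> (A *\<^sub>v z) \<le> z \<bullet> (B *\<^sub>v z)"
  shows "length (filter (\<lambda>i. m i < x) [0..<n]) \<le> length (filter (\<lambda>i. l i < x) [0..<n])"
proof (rule ccontr)
  assume "\<not> ?thesis"
  hence lt: "length (filter (\<lambda>i. l i < x) [0..<n]) < length (filter (\<lambda>i. m i < x) [0..<n])" by simp
  define cs where "cs = map (col P) (filter (\<lambda>i. \<not> m i < x) [0..<n]) @ map (col Q) (filter (\<lambda>i. l i < x) [0..<n])"
  have "length (filter (\<lambda>i. m i < x) [0..<n]) + length (filter (\<lambda>i. \<not> m i < x) [0..<n]) = n"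
    using sum_length_filter_compl[of "\<lambda>i. m i < x" "[0..<n]"] by simp
  hence len: "length cs < n" using lt unfolding cs_def by simp
  have csc: "set cs \<subseteq> carrier_vec n" unfolding cs_def using P Q by auto
  from kernel_exists[OF csc len] obtain z where z: "z \<in> carrier_vec n" "z \<noteq> 0\<^sub>v n"
    and zc: "\<forall>c\<in>set cs. c \<bullet> z = 0" by auto
  have b0: "\<And>i. i < n \<Longrightarrow> \<not> m i < x \<Longrightarrow> col P i \<bullet> z = 0" using zc unfolding cs_def by auto
  have w0: "\<And>i. i < n \<Longrightarrow> l i < x \<Longrightarrow> col Q i \<bullet> z = 0" using zc unfolding cs_def by auto
  have zz: "z \<bullet> z > 0" by (rule sprod_self_pos[OF z])
  have zzP: "z \<bullet> z = (\<Sum>k<n. (col P k \<bullet> z)^2)"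
    using sprod_self_sand[OF P z(1) z(1)] by (simp add: power2_eq_square)
  have zzQ: "z \<bullet> z = (\<Sum>k<n. (col Q k \<bullet> z)^2)"
    using sprod_self_sand[OF Q z(1) z(1)] by (simp add: power2_eq_square)
  have zB: "z \<bullet> (B *\<^sub>v z) = (\<Sum>k<n. m k * (col P k \<bullet> z)^2)"
    unfolding B using sand_quad[OF P(1) z(1)] .
  have zA: "z \<bullet> (A *\<^sub>v z) = (\<Sum>k<n. l k * (col Q k \<bullet> z)^2)"
    unfolding A using sand_quad[OF Q(1) z(1)] .
  obtain k where k: "k < n" "col P k \<bullet> z \<noteq> 0"
  proof (rule ccontr)
    assume "\<not> thesis"
    hence "\<forall>k<n. col P k \<bullet> z = 0" using that by blast
    hence "z \<bullet> z = 0" unfolding zzP by simp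
    thus False using zz by simp
  qed
  have "0 < (\<Sum>k<n. (x - m k) * (col P k \<bullet> z)^2)"
  proof (rule sum_pos2[of _ k])
    show "(x - m k) * (col P k \<bullet> z)^2 > 0" using k b0[OF k(1)] by (cases "m k < x", auto)
    fix i assume "i \<in> {..<n}"
    thus "0 \<le> (x - m i) * (col P i \<bullet> z)^2" using b0 by (cases "m i < x", auto)
  qed (insert k, auto)
  hence Bl: "z \<bullet> (B *\<^sub>v z) < x * (z \<bullet> z)"
    unfolding zB zzP by (simp add: sum_distrib_left left_diff_distrib sum_subtractf)
  have "0 \<le> (\<Sum>k<n. (l k - x) * (col Q k \<bullet> z)^2)"
  proof (rule sum_nonneg)
    fix i assume "i \<in> {..<n}"
    thus "0 \<le> (l i - x) * (col Q i \<bullet> z)^2" using w0 by (cases "l i < x", auto)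
  qed
  hence Al: "x * (z \<bullet> z) \<le> z \<bullet> (A *\<^sub>v z)"
    unfolding zA zzQ by (simp add: sum_distrib_left left_diff_distrib sum_subtractf)
  from Bl Al mono[OF z(1)] show False by simp
qed

lemma sorted_cmp:
  fixes xs ys :: "real list"
  assumes sx: "sorted xs" and sy: "sorted ys" and len: "length xs = length ys"
    and cnt: "\<And>x. length (filter (\<lambda>y. y < x) ys) \<le> length (filter (\<lambda>y. y < x) xs)"
    and k: "k < length xs"
  shows "xs ! k \<le> ys ! k"
proof (rule ccontr)
  assume "\<not> ?thesis"
  hence lt: "ys ! k < xs ! k" by simp
  let ?x = "xs ! k"
  have "{0..k} \<subseteq> {i. i < length ys \<and> ys ! i < ?x}"
  proof
    fix i assume "i \<in> {0..k}"
    hence i: "i \<le> k" by auto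
    have "ys ! i \<le> ys ! k" using sy i k len by (intro sorted_nth_mono, auto)
    thus "i \<in> {i. i < length ys \<and> ys ! i < ?x}" using i k len lt by auto
  qed
  hence "card {0..k} \<le> card {i. i < length ys \<and> ys ! i < ?x}" by (intro card_mono, auto)
  hence c1: "Suc k \<le> length (filter (\<lambda>y. y < ?x) ys)" by (simp add: length_filter_conv_card)
  have "{i. i < length xs \<and> xs ! i < ?x} \<subseteq> {0..<k}"
  proof
    fix i assume i: "i \<in> {i. i < length xs \<and> xs ! i < ?x}"
    show "i \<in> {0..<k}"
    proof (rule ccontr)
      assume "i \<notin> {0..<k}"
      hence "k \<le> i" by auto
      hence "xs ! k \<le> xs ! i" using sx i by (intro sorted_nth_mono, auto)
      thus False using i by auto
    qed
  qed
  hence "card {i. i < length xs \<and> xs ! i < ?x} \<le> card {0..<k}" by (intro card_mono, auto)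
  hence c2: "length (filter (\<lambda>y. y < ?x) xs) \<le> k" by (simp add: length_filter_conv_card)
  from c1 c2 cnt[of ?x] show False by simp
qed

lemma length_filter_sort: "length (filter P (sort xs)) = length (filter P (xs :: real list))"
proof -
  have "mset (filter P (sort xs)) = mset (filter P xs)" by simp
  thus ?thesis by (metis size_mset)
qed

lemma sum_sort: "(\<Sum>i<length xs. f (sort xs ! i)) = (\<Sum>i<length xs. f ((xs :: real list) ! i))"
proof -
  have "(\<Sum>i<length xs. f (sort xs ! i)) = sum_list (map f (sort xs))"
    by (simp add: sum_list_sum_nth lessThan_atLeast0)
  also have "\<dots> = sum_list (map f xs)" by (metis mset_map mset_sort sum_mset_sum_list)
  also have "\<dots> = (\<Sum>i<length xs. f (xs ! i))" by (simp add: sum_list_sum_nth lessThan_atLeast0)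
  finally show ?thesis .
qed

definition outer :: "nat \<Rightarrow> real vec \<Rightarrow> real vec \<Rightarrow> real mat" where
  "outer n a b = mat n n (\<lambda>(i,j). a $ i * b $ j)"

lemma outer_carrier[simp]: "outer n a b \<in> carrier_mat n n"
  unfolding outer_def by auto

lemma outer_dims[simp]: "dim_row (outer n a b) = n" "dim_col (outer n a b) = n"
  unfolding outer_def by auto

lemma outer_mult_vec:
  assumes a: "a \<in> carrier_vec n" and b: "b \<in> carrier_vec n" and x: "x \<in> carrier_vec n"
  shows "outer n a b *\<^sub>v x = (b \<bullet> x) \<cdot>\<^sub>v a"
  by (rule eq_vecI, insert a b x, auto simp: outer_def scalar_prod_def sum_distrib_left ac_simps
    intro!: sum.cong)

lemma frob_outer:
  assumes C: "C \<in> carrier_mat n n" and v: "v \<in> carrier_vec n"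
  shows "frob C (outer n v v) = v \<bullet> (C *\<^sub>v v)"
  unfolding frob_def outer_def using C v
  by (auto simp: scalar_prod_def lessThan_atLeast0 sum_distrib_left ac_simps intro!: sum.cong)

lemma sherman:
  assumes M: "M \<in> carrier_mat n n" and R: "R \<in> carrier_mat n n" and MR: "M * R = 1\<^sub>m n"
    and Rs: "transpose_mat R = R" and v: "v \<in> carrier_vec n"
    and w: "w = R *\<^sub>v v" and s: "s = v \<bullet> w" and ts: "1 - t * s \<noteq> 0" and c: "c = t / (1 - t * s)"
  shows "(M - t \<cdot>\<^sub>m outer n v v) * (R + c \<cdot>\<^sub>m outer n w w) = 1\<^sub>m n"
proof (rule eq_matI)
  have wc: "w \<in> carrier_vec n" using w R v by auto
  fix i j assume "i < dim_row (1\<^sub>m n)" "j < dim_col (1\<^sub>m n)"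
  hence i: "i < n" and j: "j < n" by auto
  have MRij: "(\<Sum>k<n. M $$ (i,k) * R $$ (k,j)) = (if i = j then 1 else 0)"
  proof -
    have "(M * R) $$ (i,j) = (\<Sum>k<n. M $$ (i,k) * R $$ (k,j))"
      using M R i j by (auto simp: scalar_prod_def lessThan_atLeast0)
    thus ?thesis using MR i j by simp
  qed
  have Mw: "(\<Sum>k<n. M $$ (i,k) * w $ k) = v $ i"
  proof -
    have "M *\<^sub>v w = (M * R) *\<^sub>v v" unfolding w using M R v by (simp add: assoc_mult_mat_vec)
    also have "\<dots> = v" using MR v by simp
    finally have "(M *\<^sub>v w) $ i = v $ i" by simp
    thus ?thesis using M i wc by (auto simp: scalar_prod_def lessThan_atLeast0)
  qed
  have vR: "(\<Sum>k<n. v $ k * R $$ (k,j)) = w $ j"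
  proof -
    have "w $ j = (\<Sum>k<n. R $$ (j,k) * v $ k)" unfolding w using R v j
      by (auto simp: scalar_prod_def lessThan_atLeast0)
    also have "\<dots> = (\<Sum>k<n. v $ k * R $$ (k,j))"
    proof (rule sum.cong[OF refl])
      fix k assume "k \<in> {..<n}"
      hence "R $$ (j,k) = R $$ (k,j)" using Rs R j by (metis carrier_matD index_transpose_mat(1) lessThan_iff)
      thus "R $$ (j,k) * v $ k = v $ k * R $$ (k,j)" by simp
    qed
    finally show ?thesis by simp
  qed
  have vw: "(\<Sum>k<n. v $ k * w $ k) = s" unfolding s using wc by (simp add: scalar_prod_def lessThan_atLeast0)
  have "((M - t \<cdot>\<^sub>m outer n v v) * (R + c \<cdot>\<^sub>m outer n w w)) $$ (i,j)
      = (\<Sum>k<n. (M $$ (i,k) - t * (v $ i * v $ k)) * (R $$ (k,j) + c * (w $ k * w $ j)))"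
    using M R i j by (auto simp: scalar_prod_def lessThan_atLeast0 outer_def)
  also have "\<dots> = (\<Sum>k<n. M $$ (i,k) * R $$ (k,j)) + c * w $ j * (\<Sum>k<n. M $$ (i,k) * w $ k)
      - t * v $ i * (\<Sum>k<n. v $ k * R $$ (k,j)) - t * c * v $ i * w $ j * (\<Sum>k<n. v $ k * w $ k)"
    by (simp add: algebra_simps sum.distrib sum_subtractf sum_distrib_left)
  also have "\<dots> = (if i = j then 1 else 0) + v $ i * w $ j * (c * (1 - t * s) - t)"
    unfolding MRij Mw vR vw by (simp add: algebra_simps)
  also have "c * (1 - t * s) - t = 0" unfolding c using ts by simp
  finally show "((M - t \<cdot>\<^sub>m outer n v v) * (R + c \<cdot>\<^sub>m outer n w w)) $$ (i,j) = 1\<^sub>m n $$ (i,j)"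
    using i j by simp
qed (insert M R, auto)

lemma tr_plus_outer:
  assumes R: "R \<in> carrier_mat n n" and w: "w \<in> carrier_vec n"
  shows "tr (R + c \<cdot>\<^sub>m outer n w w) = tr R + c * (w \<bullet> w)"
  unfolding tr_def using R w
  by (auto simp: outer_def scalar_prod_def lessThan_atLeast0 sum.distrib sum_distrib_left)

lemma scalar_key:
  fixes cc a w :: "nat \<Rightarrow> real"
  assumes cc: "\<And>k. k < n \<Longrightarrow> cc k > 0" and ww: "(\<Sum>k<n. (w k)^2) = 1" and t: "t > 0"
    and ts: "t * (\<Sum>k<n. (a k)^2 / cc k) < 1"
  shows "(\<Sum>k<n. cc k * (w k)^2) - t * (\<Sum>k<n. a k * w k)^2 > 0"
proof -
  define X where "X = (\<Sum>k<n. a k * w k)"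
  define S where "S = (\<Sum>k<n. (a k)^2 / cc k)"
  define C where "C = (\<Sum>k<n. cc k * (w k)^2)"
  define al where "al = t * X"
  have "0 \<le> (\<Sum>k<n. cc k * (w k - al * a k / cc k)^2)"
  proof (rule sum_nonneg)
    fix k assume "k \<in> {..<n}"
    hence "cc k > 0" using cc by auto
    thus "0 \<le> cc k * (w k - al * a k / cc k)^2" by simp
  qed
  also have "\<dots> = (\<Sum>k<n. cc k * (w k)^2 - 2 * al * (a k * w k) + al^2 * ((a k)^2 / cc k))"
  proof (rule sum.cong[OF refl])
    fix k assume "k \<in> {..<n}"
    hence "cc k \<noteq> 0" using cc[of k] by auto
    thus "cc k * (w k - al * a k / cc k)^2 = cc k * (w k)^2 - 2 * al * (a k * w k) + al^2 * ((a k)^2 / cc k)"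
      by (simp add: field_simps power2_eq_square)
  qed
  also have "\<dots> = C - 2 * al * X + al^2 * S"
    unfolding C_def X_def S_def by (simp add: sum.distrib sum_subtractf sum_distrib_left)
  finally have ineq: "C \<ge> t * X^2 * (2 - t * S)" unfolding al_def by (simp add: algebra_simps power2_eq_square)
  have tS: "t * S < 1" using ts unfolding S_def .
  show ?thesis
  proof (cases "X = 0")
    case True
    obtain k where k: "k < n" "w k \<noteq> 0"
    proof (rule ccontr)
      assume "\<not> thesis"
      hence "\<forall>k<n. w k = 0" using that by blast
      thus False using ww by simp
    qed
    have "0 < C" unfolding C_def
    proof (rule sum_pos2[of _ k])
      show "0 < cc k * (w k)^2" using k cc[of k] by simp
      fix i assume "i \<in> {..<n}"
      hence "cc i > 0" using cc by auto
      thus "0 \<le> cc i * (w i)^2" by simp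
    qed (insert k, auto)
    thus ?thesis using True unfolding X_def C_def by simp
  next
    case False
    hence "t * X^2 > 0" using t by simp
    hence "t * X^2 * (1 - t * S) > 0" using tS by simp
    hence "t * X^2 * (2 - t * S) > t * X^2" by (simp add: algebra_simps)
    thus ?thesis using ineq unfolding X_def C_def by simp
  qed
qed

lemma smult_mat_vec':
  assumes A: "A \<in> carrier_mat n n" and v: "v \<in> carrier_vec n"
  shows "(k \<cdot>\<^sub>m A) *\<^sub>v v = k \<cdot>\<^sub>v (A *\<^sub>v v)"
  by (rule eq_vecI, insert A v, auto simp: scalar_prod_def sum_distrib_left ac_simps)

lemma sand_cong:
  assumes "\<And>i. i < n \<Longrightarrow> f i = g i"
  shows "sand n Q f = sand n Q g"
proof -
  have "mat_diag n f = mat_diag n g" by (rule eq_matI, insert assms, auto simp: mat_diag_def)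
  thus ?thesis unfolding sand_def by simp
qed

lemma col_orth:
  assumes P: "P \<in> carrier_mat n n" and PtP: "transpose_mat P * P = 1\<^sub>m n" and k: "k < n" and j: "j < n"
  shows "col P k \<bullet> col P j = (if k = j then 1 else 0)"
proof -
  have "(transpose_mat P * P) $$ (k,j) = col P k \<bullet> col P j" using P k j by (simp add: row_transpose)
  thus ?thesis using PtP k j by simp
qed

lemma sum_single: "(j::nat) < n \<Longrightarrow> (\<Sum>k<n. f k * (if k = j then 1 else 0)^2) = (f j :: real)"
proof -
  assume j: "j < n"
  have "(\<Sum>k<n. f k * (if k = j then 1 else 0)^2) = (\<Sum>k<n. if k = j then f k else 0)"
    by (rule sum.cong, auto)
  also have "\<dots> = f j" using j by (subst sum.delta, auto)
  finally show ?thesis .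
qed

theorem lemma3p10:
  fixes n T :: nat and A :: "real mat" and u \<delta>U t :: real and v :: "real vec"
  assumes "A \<in> carrier_mat n n" and "transpose_mat A = A"
    and "1 \<le> T" and "T \<le> n"
    and "u > lambda_max A" and "\<delta>U > 0" and "t > 0"
    and "v \<in> carrier_vec n"
    and "Y = mat n n (\<lambda>(i,j). v $ i * v $ j)"
    and "UA = (1 / (upper_potential T u A - upper_potential T (u + \<delta>U) A))
                \<cdot>\<^sub>m (minv ((u + \<delta>U) \<cdot>\<^sub>m 1\<^sub>m n - A) * minv ((u + \<delta>U) \<cdot>\<^sub>m 1\<^sub>m n - A))
              + minv ((u + \<delta>U) \<cdot>\<^sub>m 1\<^sub>m n - A)"
    and "frob UA Y \<le> 1 / t"
  shows "upper_potential T (u + \<delta>U) (A + t \<cdot>\<^sub>m Y) \<le> upper_potential T u A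
         \<and> lambda_max (A + t \<cdot>\<^sub>m Y) < u + \<delta>U"
proof -
  note assms_all = assms
  have A: "A \<in> carrier_mat n n" and symA: "transpose_mat A = A" and T1: "1 \<le> T" and Tn: "T \<le> n"
    and uA: "u > lambda_max A" and dU: "\<delta>U > 0" and t0: "t > 0" and v: "v \<in> carrier_vec n"
    and hyp: "frob UA Y \<le> 1 / t" using assms by auto
  define up where "up = u + \<delta>U"
  have uup: "u < up" unfolding up_def using dU by simp
  have n0: "n > 0" using T1 Tn by simp
  have Y: "Y = outer n v v" unfolding outer_def using assms(9) .
  have Yc: "Y \<in> carrier_mat n n" unfolding Y by simp
  have symAij: "\<And>i j. i < n \<Longrightarrow> j < n \<Longrightarrow> A $$ (i,j) = A $$ (j,i)"
    using symA A by (metis carrier_matD index_transpose_mat(1))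
  obtain Q l where Q: "Q \<in> carrier_mat n n" and QtQ: "transpose_mat Q * Q = 1\<^sub>m n"
    and QQt: "Q * transpose_mat Q = 1\<^sub>m n" and Aeq: "A = sand n Q l"
    using spectral[OF A symA] by blast
  define LA where "LA = sort (map l [0..<n])"
  have eA: "eigs A = LA" unfolding LA_def Aeq by (rule eigs_sand[OF Q QtQ QQt])
  have lenLA: "length LA = n" unfolding LA_def by simp
  have setLA: "set LA = l ` {0..<n}" unfolding LA_def by simp
  have sLA: "sorted LA" unfolding LA_def by simp
  have lu: "\<And>i. i < n \<Longrightarrow> l i < u"
  proof -
    fix i assume "i < n"
    hence "l i \<in> set LA" using setLA by auto
    hence "l i \<le> last LA" by (rule sorted_le_last[OF sLA])
    thus "l i < u" using uA unfolding lambda_max_def eA by simp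
  qed
  have lup: "\<And>i. i < n \<Longrightarrow> l i < up" using lu uup less_trans by blast
  have LAu: "\<And>i. i < n \<Longrightarrow> LA ! i < u"
  proof -
    fix i assume "i < n"
    hence "LA ! i \<in> set LA" using lenLA by simp
    thus "LA ! i < u" using setLA lu by auto
  qed
  define B where "B = A + t \<cdot>\<^sub>m Y"
  have Bc: "B \<in> carrier_mat n n" unfolding B_def using A Yc by simp
  have symB: "transpose_mat B = B"
    by (rule eq_matI, insert A symAij, auto simp: B_def Y outer_def)
  obtain P m where P: "P \<in> carrier_mat n n" and PtP: "transpose_mat P * P = 1\<^sub>m n"
    and PPt: "P * transpose_mat P = 1\<^sub>m n" and Beq: "B = sand n P m"
    using spectral[OF Bc symB] by blast
  define LB where "LB = sort (map m [0..<n])"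
  have eB: "eigs B = LB" unfolding LB_def Beq by (rule eigs_sand[OF P PtP PPt])
  have lenLB: "length LB = n" unfolding LB_def by simp
  have setLB: "set LB = m ` {0..<n}" unfolding LB_def by simp
  have sLB: "sorted LB" unfolding LB_def by simp
  have Bquad: "\<And>z. z \<in> carrier_vec n \<Longrightarrow> z \<bullet> (B *\<^sub>v z) = z \<bullet> (A *\<^sub>v z) + t * (v \<bullet> z)^2"
  proof -
    fix z :: "real vec" assume z: "z \<in> carrier_vec n"
    have "B *\<^sub>v z = A *\<^sub>v z + t \<cdot>\<^sub>v ((v \<bullet> z) \<cdot>\<^sub>v v)"
      unfolding B_def using A Yc z
      by (simp add: add_mult_distrib_mat_vec[of _ n n] smult_mat_vec'[of _ n] Y outer_mult_vec[OF v v z])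
    hence "z \<bullet> (B *\<^sub>v z) = z \<bullet> (A *\<^sub>v z) + t * ((v \<bullet> z) * (z \<bullet> v))"
      using A z v by (simp add: scalar_prod_add_distrib[of _ n] scalar_prod_smult_right)
    also have "z \<bullet> v = v \<bullet> z" using z v by (rule comm_scalar_prod)
    finally show "z \<bullet> (B *\<^sub>v z) = z \<bullet> (A *\<^sub>v z) + t * (v \<bullet> z)^2" by (simp add: power2_eq_square)
  qed
  define g where "g = (\<lambda>i. 1 / (up - l i))"
  define M where "M = up \<cdot>\<^sub>m 1\<^sub>m n - A"
  define R where "R = sand n Q g"
  have Mc: "M \<in> carrier_mat n n" unfolding M_def using A by auto
  have Rc: "R \<in> carrier_mat n n" unfolding R_def using Q by simp
  have Meq: "M = sand n Q (\<lambda>i. up - l i)"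
    unfolding M_def Aeq sand_one[OF Q QQt, symmetric] sand_lin[OF Q] by simp
  have MR: "M * R = 1\<^sub>m n"
  proof -
    have "M * R = sand n Q (\<lambda>i. (up - l i) * g i)" unfolding Meq R_def by (rule sand_mult[OF Q QtQ])
    also have "\<dots> = sand n Q (\<lambda>_. 1)"
    proof (rule sand_cong)
      fix i assume "i < n"
      hence "up - l i \<noteq> 0" using lu[of i] uup by simp
      thus "(up - l i) * g i = 1" unfolding g_def by simp
    qed
    also have "\<dots> = 1\<^sub>m n" by (rule sand_one[OF Q QQt])
    finally show ?thesis .
  qed
  have Rmin: "minv M = R" by (rule minv_unique[OF Mc Rc MR])
  have Rsym: "transpose_mat R = R" unfolding R_def by (rule sand_sym[OF Q])
  define w where "w = R *\<^sub>v v"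
  define s where "s = v \<bullet> w"
  define r2 where "r2 = w \<bullet> w"
  have wc: "w \<in> carrier_vec n" unfolding w_def using Rc v by simp
  have pot: "\<And>x C. C \<in> carrier_mat n n \<Longrightarrow> upper_potential T x C = (\<Sum>i\<in>{n - T..<n}. 1 / (x - eigs C ! i))"
    unfolding upper_potential_def by simp
  define D where "D = upper_potential T u A - upper_potential T up A"
  have Deq: "D = (\<Sum>i\<in>{n - T..<n}. 1 / (u - LA ! i) - 1 / (up - LA ! i))"
    unfolding D_def pot[OF A] eA by (simp add: sum_subtractf)
  have Dpos: "D > 0" unfolding Deq
  proof (rule sum_pos)
    show "{n - T..<n} \<noteq> {}" using T1 Tn by simp
    fix i assume "i \<in> {n - T..<n}"
    hence i: "i < n" by simp
    have "0 < u - LA ! i" using LAu[OF i] by simp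
    moreover have "u - LA ! i < up - LA ! i" using uup by simp
    ultimately show "0 < 1 / (u - LA ! i) - 1 / (up - LA ! i)"
      by (simp add: frac_less2)
  qed simp
  have UA: "UA = (1 / D) \<cdot>\<^sub>m (R * R) + R"
    using assms(10) unfolding D_def up_def[symmetric] M_def[symmetric] Rmin .
  have vRRv: "v \<bullet> ((R * R) *\<^sub>v v) = r2"
  proof -
    have "v \<bullet> ((R * R) *\<^sub>v v) = v \<bullet> (R *\<^sub>v w)" unfolding w_def using Rc v by (simp add: assoc_mult_mat_vec)
    also have "\<dots> = (R *\<^sub>v v) \<bullet> w" by (rule sym_sprod[OF Rc Rsym v wc])
    finally show ?thesis unfolding r2_def w_def .
  qed
  have frobeq: "frob UA Y = (1 / D) * r2 + s"
  proof -
    have RR: "R * R \<in> carrier_mat n n" using Rc by simp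
    have "frob UA Y = v \<bullet> (UA *\<^sub>v v)" unfolding Y UA by (rule frob_outer, insert RR Rc v, auto)
    also have "UA *\<^sub>v v = (1 / D) \<cdot>\<^sub>v ((R * R) *\<^sub>v v) + R *\<^sub>v v" unfolding UA
      using RR Rc v by (simp add: add_mult_distrib_mat_vec[of _ n n] smult_mat_vec'[of _ n])
    also have "v \<bullet> \<dots> = (1 / D) * (v \<bullet> ((R * R) *\<^sub>v v)) + v \<bullet> (R *\<^sub>v v)"
      using RR Rc v by (simp add: scalar_prod_add_distrib[of _ n] scalar_prod_smult_right)
    finally show ?thesis unfolding vRRv s_def w_def .
  qed
  have hyp2: "(1 / D) * r2 + s \<le> 1 / t" using hyp frobeq by simp
  define a where "a = (\<lambda>k. col Q k \<bullet> v)"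
  have s_sum: "s = (\<Sum>k<n. (a k)^2 / (up - l k))"
    unfolding s_def w_def R_def sand_quad[OF Q v] a_def g_def by simp
  have s0: "s \<ge> 0" unfolding s_sum
    by (rule sum_nonneg, insert lu uup, smt (verit) lessThan_iff divide_nonneg_pos zero_le_power2)
  have r20: "r2 \<ge> 0" unfolding r2_def using wc by (metis sprod_self_pos less_imp_le order_refl scalar_prod_left_zero zero_carrier_vec)
  have ts: "t * s < 1"
  proof (cases "w = 0\<^sub>v n")
    case True
    hence "s = 0" unfolding s_def using v by simp
    thus ?thesis by simp
  next
    case False
    hence "r2 > 0" unfolding r2_def using sprod_self_pos[OF wc] by simp
    hence "(1 / D) * r2 > 0" using Dpos by simp
    hence "s < 1 / t" using hyp2 by simp
    thus ?thesis using t0 by (simp add: field_simps)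
  qed
  have lmB: "lambda_max B < up"
  proof -
    have "LB \<noteq> []" using lenLB n0 by auto
    hence "last LB \<in> set LB" by simp
    then obtain j where j: "j < n" and lj: "last LB = m j" using setLB by auto
    define p where "p = col P j"
    have pc: "p \<in> carrier_vec n" unfolding p_def using col_carrier_vec[OF j P] .
    have pP: "\<And>k. k < n \<Longrightarrow> col P k \<bullet> p = (if k = j then 1 else 0)"
      unfolding p_def using col_orth[OF P PtP _ j] by simp
    have pBp: "p \<bullet> (B *\<^sub>v p) = m j" unfolding Beq sand_quad[OF P pc]
      using pP sum_single[OF j, of m] by simp
    have pp: "p \<bullet> p = 1" using sprod_self_sand[OF P PPt pc pc] pP sum_single[OF j, of "\<lambda>_. 1"]
      by (simp add: power2_eq_square)
    define wq where "wq = (\<lambda>k. col Q k \<bullet> p)"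
    have pAp: "p \<bullet> (A *\<^sub>v p) = (\<Sum>k<n. l k * (wq k)^2)" unfolding Aeq sand_quad[OF Q pc] wq_def ..
    have ppQ: "(\<Sum>k<n. (wq k)^2) = 1" using sprod_self_sand[OF Q QQt pc pc] pp unfolding wq_def
      by (simp add: power2_eq_square)
    have vp: "v \<bullet> p = (\<Sum>k<n. a k * wq k)" using sprod_self_sand[OF Q QQt v pc] unfolding a_def wq_def .
    have key: "(\<Sum>k<n. (up - l k) * (wq k)^2) - t * (\<Sum>k<n. a k * wq k)^2 > 0"
      by (rule scalar_key[OF _ ppQ t0], insert lup ts s_sum, auto)
    have "(\<Sum>k<n. (up - l k) * (wq k)^2) = up * (\<Sum>k<n. (wq k)^2) - (\<Sum>k<n. l k * (wq k)^2)"
      by (simp add: left_diff_distrib sum_subtractf sum_distrib_left)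
    hence "(\<Sum>k<n. (up - l k) * (wq k)^2) = up - p \<bullet> (A *\<^sub>v p)" using ppQ pAp by simp
    hence "up - p \<bullet> (B *\<^sub>v p) > 0" using key Bquad[OF pc] vp by simp
    thus ?thesis unfolding lambda_max_def eB lj using pBp by simp
  qed
  have mup: "\<And>i. i < n \<Longrightarrow> m i < up"
  proof -
    fix i assume "i < n"
    hence "m i \<in> set LB" using setLB by auto
    hence "m i \<le> last LB" by (rule sorted_le_last[OF sLB])
    thus "m i < up" using lmB unfolding lambda_max_def eB by simp
  qed
  have LBup: "\<And>i. i < n \<Longrightarrow> LB ! i < up"
  proof -
    fix i assume "i < n"
    hence "LB ! i \<in> set LB" using lenLB by simp
    thus "LB ! i < up" using setLB mup by auto
  qed
  have weyl: "\<And>k. k < n \<Longrightarrow> LA ! k \<le> LB ! k"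
  proof -
    fix k assume k: "k < n"
    have cnt: "\<And>x. length (filter (\<lambda>y. y < x) LB) \<le> length (filter (\<lambda>y. y < x) LA)"
    proof -
      fix x :: real
      have "length (filter (\<lambda>i. m i < x) [0..<n]) \<le> length (filter (\<lambda>i. l i < x) [0..<n])"
        by (rule weyl_count[OF Q(1) QQt Aeq P(1) PPt Beq], insert Bquad t0, auto)
      thus "length (filter (\<lambda>y. y < x) LB) \<le> length (filter (\<lambda>y. y < x) LA)"
        unfolding LA_def LB_def length_filter_sort length_filter_map by (simp add: comp_def)
    qed
    show "LA ! k \<le> LB ! k" by (rule sorted_cmp[OF sLA sLB _ cnt], insert lenLA lenLB k, auto)
  qed
  define c where "c = t / (1 - t * s)"
  define N where "N = R + c \<cdot>\<^sub>m outer n w w"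
  define X where "X = up \<cdot>\<^sub>m 1\<^sub>m n - B"
  have Xc: "X \<in> carrier_mat n n" unfolding X_def using Bc by auto
  have Nc: "N \<in> carrier_mat n n" unfolding N_def using Rc by simp
  have XM: "X = M - t \<cdot>\<^sub>m outer n v v"
    by (rule eq_matI, insert A, auto simp: X_def M_def B_def Y outer_def)
  have XN: "X * N = 1\<^sub>m n" unfolding XM N_def
    by (rule sherman[OF Mc Rc MR Rsym v w_def s_def _ c_def], insert ts, simp)
  define K where "K = sand n P (\<lambda>i. 1 / (up - m i))"
  have Kc: "K \<in> carrier_mat n n" unfolding K_def using P by simp
  have Xeq: "X = sand n P (\<lambda>i. up - m i)"
    unfolding X_def Beq sand_one[OF P PPt, symmetric] sand_lin[OF P] by simp
  have XK: "X * K = 1\<^sub>m n"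
  proof -
    have "X * K = sand n P (\<lambda>i. (up - m i) * (1 / (up - m i)))" unfolding Xeq K_def by (rule sand_mult[OF P PtP])
    also have "\<dots> = sand n P (\<lambda>_. 1)"
    proof (rule sand_cong)
      fix i assume "i < n"
      hence "up - m i \<noteq> 0" using mup[of i] by simp
      thus "(up - m i) * (1 / (up - m i)) = 1" by simp
    qed
    also have "\<dots> = 1\<^sub>m n" by (rule sand_one[OF P PPt])
    finally show ?thesis .
  qed
  have NK: "N = K" using minv_unique[OF Xc Nc XN] minv_unique[OF Xc Kc XK] by simp
  have trK: "tr K = (\<Sum>i<n. 1 / (up - m i))" unfolding K_def by (rule sand_trace[OF P PtP])
  have trN: "tr N = (\<Sum>i<n. 1 / (up - l i)) + c * r2"
  proof -
    have "tr N = tr R + c * r2" unfolding N_def r2_def by (rule tr_plus_outer[OF Rc wc])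
    also have "tr R = (\<Sum>i<n. 1 / (up - l i))" unfolding R_def g_def by (rule sand_trace[OF Q QtQ])
    finally show ?thesis .
  qed
  have SM: "(\<Sum>i<n. 1 / (up - m i)) = (\<Sum>i<n. 1 / (up - l i)) + c * r2"
    using trK trN NK by simp
  have totB: "(\<Sum>i<n. 1 / (up - LB ! i)) = (\<Sum>i<n. 1 / (up - m i))"
    using sum_sort[where xs="map m [0..<n]" and f="\<lambda>y. 1 / (up - y)"] unfolding LB_def by simp
  have totA: "(\<Sum>i<n. 1 / (up - LA ! i)) = (\<Sum>i<n. 1 / (up - l i))"
    using sum_sort[where xs="map l [0..<n]" and f="\<lambda>y. 1 / (up - y)"] unfolding LA_def by simp
  have split: "\<And>f :: nat \<Rightarrow> real. (\<Sum>i<n. f i) = (\<Sum>i\<in>{0..<n - T}. f i) + (\<Sum>i\<in>{n - T..<n}. f i)"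
    by (simp add: lessThan_atLeast0 sum.atLeastLessThan_concat)
  have bot: "(\<Sum>i\<in>{0..<n - T}. 1 / (up - LA ! i)) \<le> (\<Sum>i\<in>{0..<n - T}. 1 / (up - LB ! i))"
  proof (rule sum_mono)
    fix i assume "i \<in> {0..<n - T}"
    hence i: "i < n" by simp
    show "1 / (up - LA ! i) \<le> 1 / (up - LB ! i)"
      by (rule frac_le, insert weyl[OF i] LBup[OF i], auto)
  qed
  have cr2: "c * r2 \<le> D"
  proof -
    have "t * r2 + t * s * D \<le> D"
    proof -
      have "t * D * ((1 / D) * r2 + s) \<le> t * D * (1 / t)"
        using hyp2 t0 Dpos by (intro mult_left_mono, auto)
      moreover have "t * D * ((1 / D) * r2 + s) = t * r2 + t * s * D" using Dpos by (simp add: field_simps)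
      moreover have "t * D * (1 / t) = D" using t0 by simp
      ultimately show ?thesis by simp
    qed
    hence "t * r2 \<le> D * (1 - t * s)" by (simp add: algebra_simps)
    thus ?thesis unfolding c_def using ts by (simp add: pos_divide_le_eq mult.commute)
  qed
  have PhiB: "upper_potential T up B = (\<Sum>i\<in>{n - T..<n}. 1 / (up - LB ! i))"
    unfolding pot[OF Bc] eB ..
  have PhiAup: "upper_potential T up A = (\<Sum>i\<in>{n - T..<n}. 1 / (up - LA ! i))"
    unfolding pot[OF A] eA ..
  have "upper_potential T up B \<le> upper_potential T up A + c * r2"
    using split[of "\<lambda>i. 1 / (up - LB ! i)"] split[of "\<lambda>i. 1 / (up - LA ! i)"] totA totB SM bot
    unfolding PhiB PhiAup by linarith
  also have "\<dots> \<le> upper_potential T up A + D" using cr2 by simp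
  also have "\<dots> = upper_potential T u A" unfolding D_def by simp
  finally have res1: "upper_potential T up B \<le> upper_potential T u A" .
  show ?thesis using res1 lmB unfolding B_def up_def by simp
qed

end
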